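(* Let $X$ be a nonempty set and let $G$ be a permutation group on $X$ which separates $X$. Then $G$ does not satisfy any group law; that is, for every $k\ge 1$ and every nontrivial element $w\ne 1$ of the free group $F_k$ on generators $f_1,\dots,f_k$, there exist $g_1,\dots,g_k\in G$ with $w(g_1,\dots,g_k)\neq 1$.
   Context: A permutation group $G$ on a set $X$ separates $X$ if for every finite subset $Y\subseteq X$, the pointwise stabilizer $G_Y=\{g\in G: y^g=y \text{ for all } y\in Y\}$ fixes no point of $X\setminus Y$. For $w\in F_k$ and $g_1,\dots,g_k\in G$, $w(g_1,\dots,g_k)$ denotes the element of $G$ obtained by substituting $f_i=g_i$. A group satisfies the group law $w$ if $w(g_1,\dots,g_k)=1$ for all $g_i\in G$. *)

theory Defs
  imports "HOL-Algebra.Bij"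
begin

text \<open>Elements of the free group F_k on generators f_0,...,f_(k-1) are represented
  by reduced words: lists of letters (b, i) with i < k, where (True, i) stands for f_i
  and (False, i) for its inverse, and no letter is adjacent to its inverse.\<close>

definition letter_inverse :: "bool \<times> nat \<Rightarrow> bool \<times> nat" where
  "letter_inverse l = (\<not> fst l, snd l)"

fun reduced_word :: "(bool \<times> nat) list \<Rightarrow> bool" where
  "reduced_word [] = True"
| "reduced_word [l] = True"
| "reduced_word (l1 # l2 # w) = (l2 \<noteq> letter_inverse l1 \<and> reduced_word (l2 # w))"

definition free_group_elem :: "nat \<Rightarrow> (bool \<times> nat) list \<Rightarrow> bool" where
  "free_group_elem k w \<longleftrightarrow> reduced_word w \<and> (\<forall>l \<in> set w. snd l < k)"

fun word_eval :: "('g, 'b) monoid_scheme \<Rightarrow> (nat \<Rightarrow> 'g) \<Rightarrow> (bool \<times> nat) list \<Rightarrow> 'g" where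
  "word_eval H g [] = \<one>\<^bsub>H\<^esub>"
| "word_eval H g (l # w) =
     (if fst l then g (snd l) else inv\<^bsub>H\<^esub> (g (snd l))) \<otimes>\<^bsub>H\<^esub> word_eval H g w"

definition perm_group_on :: "'a set \<Rightarrow> ('a \<Rightarrow> 'a) set \<Rightarrow> bool" where
  "perm_group_on X G \<longleftrightarrow> subgroup G (BijGroup X)"

definition separates :: "('a \<Rightarrow> 'a) set \<Rightarrow> 'a set \<Rightarrow> bool" where
  "separates G X \<longleftrightarrow>
     (\<forall>Y. finite Y \<and> Y \<subseteq> X \<longrightarrow>
        (\<forall>x \<in> X - Y. \<not> (\<forall>g \<in> {g \<in> G. \<forall>y \<in> Y. g y = y}. g x = x)))"

end

theory Submission imports Defs begin


lemma carrH: "carrier (BijGroup X) = Bij X" by (simp add: BijGroup_def)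

lemma multH: "a \<in> Bij X \<Longrightarrow> b \<in> Bij X \<Longrightarrow> y \<in> X \<Longrightarrow> (a \<otimes>\<^bsub>BijGroup X\<^esub> b) y = a (b y)"
  by (simp add: BijGroup_def compose_def)

lemma oneH: "y \<in> X \<Longrightarrow> \<one>\<^bsub>BijGroup X\<^esub> y = y"
  by (simp add: BijGroup_def)

lemma mapH: "a \<in> Bij X \<Longrightarrow> y \<in> X \<Longrightarrow> a y \<in> X"
  using Bij_imp_funcset by blast

lemma invH_closed: "a \<in> Bij X \<Longrightarrow> inv\<^bsub>BijGroup X\<^esub> a \<in> Bij X"
  using group.inv_closed[OF group_BijGroup] carrH by metis

lemma invH1: "a \<in> Bij X \<Longrightarrow> y \<in> X \<Longrightarrow> (inv\<^bsub>BijGroup X\<^esub> a) (a y) = y"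
proof -
  assume a: "a \<in> Bij X" and y: "y \<in> X"
  have "inv\<^bsub>BijGroup X\<^esub> a \<otimes>\<^bsub>BijGroup X\<^esub> a = \<one>\<^bsub>BijGroup X\<^esub>"
    using group.l_inv[OF group_BijGroup] a carrH by metis
  then have "(inv\<^bsub>BijGroup X\<^esub> a \<otimes>\<^bsub>BijGroup X\<^esub> a) y = y" using oneH y by metis
  then show ?thesis using multH[OF invH_closed[OF a] a y] by simp
qed

lemma invH2: "a \<in> Bij X \<Longrightarrow> y \<in> X \<Longrightarrow> a ((inv\<^bsub>BijGroup X\<^esub> a) y) = y"
proof -
  assume a: "a \<in> Bij X" and y: "y \<in> X"
  have "a \<otimes>\<^bsub>BijGroup X\<^esub> inv\<^bsub>BijGroup X\<^esub> a = \<one>\<^bsub>BijGroup X\<^esub>"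
    using group.r_inv[OF group_BijGroup] a carrH by metis
  then have "(a \<otimes>\<^bsub>BijGroup X\<^esub> inv\<^bsub>BijGroup X\<^esub> a) y = y" using oneH y by metis
  then show ?thesis using multH[OF a invH_closed[OF a] y] by simp
qed

lemma injH: "a \<in> Bij X \<Longrightarrow> y \<in> X \<Longrightarrow> z \<in> X \<Longrightarrow> a y = a z \<Longrightarrow> y = z"
  by (metis invH1)

lemma invH_fix: "a \<in> Bij X \<Longrightarrow> y \<in> X \<Longrightarrow> a y = y \<Longrightarrow> (inv\<^bsub>BijGroup X\<^esub> a) y = y"
  by (metis invH1)

lemma inv_multH: "a \<in> Bij X \<Longrightarrow> b \<in> Bij X \<Longrightarrow>
   inv\<^bsub>BijGroup X\<^esub> (a \<otimes>\<^bsub>BijGroup X\<^esub> b) = inv\<^bsub>BijGroup X\<^esub> b \<otimes>\<^bsub>BijGroup X\<^esub> inv\<^bsub>BijGroup X\<^esub> a"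
  using group.inv_mult_group[OF group_BijGroup] carrH by metis

lemma mult_closedH: "a \<in> Bij X \<Longrightarrow> b \<in> Bij X \<Longrightarrow> a \<otimes>\<^bsub>BijGroup X\<^esub> b \<in> Bij X"
  using group.subgroup_self[OF group_BijGroup] carrH by (metis monoid.m_closed group.is_monoid group_BijGroup)

definition L :: "'a set \<Rightarrow> (nat \<Rightarrow> 'a \<Rightarrow> 'a) \<Rightarrow> bool \<times> nat \<Rightarrow> 'a \<Rightarrow> 'a" where
  "L X g l = (if fst l then g (snd l) else inv\<^bsub>BijGroup X\<^esub> (g (snd l)))"

fun pt where
  "pt X g [] x = x"
| "pt X g (l # w) x = L X g l (pt X g w x)"

fun traj where
  "traj X g [] x = [x]"
| "traj X g (l # w) x = pt X g (l # w) x # traj X g w x"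

lemma L_Bij: "\<forall>i. g i \<in> Bij X \<Longrightarrow> L X g l \<in> Bij X"
  by (simp add: L_def invH_closed)

lemma pt_X: "\<forall>i. g i \<in> Bij X \<Longrightarrow> x \<in> X \<Longrightarrow> pt X g w x \<in> X"
  by (induction w) (auto intro: mapH L_Bij)

lemma traj_X: "\<forall>i. g i \<in> Bij X \<Longrightarrow> x \<in> X \<Longrightarrow> set (traj X g w x) \<subseteq> X"
  by (induction w) (auto simp del: pt.simps intro: pt_X)

lemma hd_traj: "hd (traj X g w x) = pt X g w x"
  by (cases w) auto

lemma eval_Bij: "\<forall>i. g i \<in> Bij X \<Longrightarrow> word_eval (BijGroup X) g w \<in> Bij X"
  by (induction w) (auto simp: carrH[symmetric] group.inv_closed[OF group_BijGroup]
      monoid.m_closed[OF group.is_monoid[OF group_BijGroup]] monoid.one_closed[OF group.is_monoid[OF group_BijGroup]])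

lemma eval_pt: "\<forall>i. g i \<in> Bij X \<Longrightarrow> x \<in> X \<Longrightarrow> word_eval (BijGroup X) g w x = pt X g w x"
proof (induction w)
  case Nil then show ?case by (simp add: oneH)
next
  case (Cons l w)
  have "word_eval (BijGroup X) g (l # w) = L X g l \<otimes>\<^bsub>BijGroup X\<^esub> word_eval (BijGroup X) g w"
    by (simp add: L_def)
  then show ?case using Cons multH[OF L_Bij[OF Cons.prems(1)] eval_Bij[OF Cons.prems(1)] Cons.prems(2)]
    by simp
qed

lemma traj_append: "\<exists>P. traj X g (w1 @ w2) x = P @ traj X g w2 x \<and> (w1 \<noteq> [] \<longrightarrow> P \<noteq> [] \<and> hd P = pt X g (w1 @ w2) x)"
proof (induction w1)
  case Nil then show ?case by auto
next
  case (Cons l w1)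
  then obtain P where "traj X g (w1 @ w2) x = P @ traj X g w2 x" by blast
  then show ?case by (intro exI[of _ "pt X g (l # w1 @ w2) x # P"]) simp
qed

lemma agree:
  assumes "\<forall>m w1 w2. w = w1 @ m # w2 \<longrightarrow> L X g' m (pt X g w2 x) = L X g m (pt X g w2 x)"
  shows "traj X g' w x = traj X g w x \<and> pt X g' w x = pt X g w x"
  using assms
proof (induction w)
  case Nil then show ?case by simp
next
  case (Cons l w)
  have h: "\<forall>m w1 w2. w = w1 @ m # w2 \<longrightarrow> L X g' m (pt X g w2 x) = L X g m (pt X g w2 x)"
  proof (intro allI impI)
    fix m w1 w2 assume "w = w1 @ m # w2"
    then show "L X g' m (pt X g w2 x) = L X g m (pt X g w2 x)" using Cons.prems
      by (metis append_Cons)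
  qed
  have "L X g' l (pt X g w x) = L X g l (pt X g w x)" using Cons.prems by (metis append_Nil)
  then show ?case using Cons.IH[OF h] by simp
qed


lemma traj_ne: "traj X g w x \<noteq> []" by (cases w) auto

lemma pt_in_traj: "pt X g w x \<in> set (traj X g w x)"
  using hd_traj traj_ne by (metis list.set_sel(1))

lemma split_facts:
  assumes d: "distinct (traj X g w x)" and w: "w = w1 @ m # w2"
  shows "pt X g w2 x \<noteq> pt X g w x \<and> pt X g w2 x \<in> set (traj X g w x)
    \<and> pt X g (m#w2) x \<in> set (traj X g w x) \<and> (w1 \<noteq> [] \<longrightarrow> pt X g (m#w2) x \<noteq> pt X g w x)"
proof -
  obtain P where P: "traj X g w x = P @ traj X g (m # w2) x"
    and hP: "w1 \<noteq> [] \<longrightarrow> P \<noteq> [] \<and> hd P = pt X g w x"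
    using traj_append[of X g w1 "m # w2" x] w by blast
  have t: "traj X g (m # w2) x = pt X g (m # w2) x # traj X g w2 x" by simp
  have y: "pt X g w2 x \<in> set (traj X g w2 x)" by (rule pt_in_traj)
  have d2: "distinct (pt X g (m # w2) x # traj X g w2 x)" using d P t by simp
  show ?thesis
  proof (cases "w1 = []")
    case True
    then show ?thesis using d2 y w t by (auto simp del: pt.simps)
  next
    case False
    then have "P \<noteq> []" "hd P = pt X g w x" using hP by auto
    then have "pt X g w x \<in> set P" by (metis list.set_sel(1))
    then have "pt X g w x \<notin> set (traj X g (m # w2) x)" using d P by auto
    then show ?thesis using y t P by (auto simp del: pt.simps)
  qed
qed

lemma main:
  assumes sub: "subgroup G (BijGroup X)" and sep: "separates G X" and x0: "x0 \<in> X"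
  shows "reduced_word w \<Longrightarrow> \<exists>g x. (\<forall>i. g i \<in> G) \<and> x \<in> X \<and> distinct (traj X g w x)"
proof (induction w)
  case Nil
  have "\<one>\<^bsub>BijGroup X\<^esub> \<in> G" using sub subgroup.one_closed by blast
  then show ?case using x0 by (intro exI[of _ "\<lambda>_. \<one>\<^bsub>BijGroup X\<^esub>"] exI[of _ x0]) simp
next
  case (Cons l w)
  have GB: "G \<subseteq> Bij X" using sub subgroup.subset carrH by metis
  have rw: "reduced_word w" using Cons.prems by (cases w) auto
  obtain g x where gG: "\<forall>i. g i \<in> G" and x: "x \<in> X" and d: "distinct (traj X g w x)"
    using Cons.IH[OF rw] by blast
  have gB: "\<forall>i. g i \<in> Bij X" using gG GB by blast
  define i where "i = snd l"
  define xj where "xj = pt X g w x"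
  define T where "T = set (traj X g w x)"
  define a where "a = L X g l"
  define c where "c = a xj"
  have aB: "a \<in> Bij X" unfolding a_def using L_Bij[OF gB] .
  have xjX: "xj \<in> X" unfolding xj_def using pt_X[OF gB x] .
  have cX: "c \<in> X" unfolding c_def using mapH[OF aB xjX] .
  have TX: "T \<subseteq> X" unfolding T_def using traj_X[OF gB x] .
  have "\<exists>h\<in>G. (\<forall>s\<in>T-{c}. h s = s) \<and> h c \<notin> T"
  proof (cases "c \<in> T")
    case False
    have "\<one>\<^bsub>BijGroup X\<^esub> \<in> G" using sub subgroup.one_closed by blast
    then show ?thesis using False cX TX oneH by (metis DiffD1 subsetD)
  next
    case True
    have "finite (T - {c})" "T - {c} \<subseteq> X" "c \<in> X - (T - {c})" using TX cX unfolding T_def by auto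
    then obtain h where hG: "h \<in> G" and hY: "\<forall>y\<in>T-{c}. h y = y" and hc: "h c \<noteq> c"
      using sep unfolding separates_def by blast
    have "h c \<notin> T"
    proof
      assume "h c \<in> T"
      then have "h (h c) = h c" using hY hc by blast
      moreover have hB0: "h \<in> Bij X" using hG GB by blast
      moreover have "h c \<in> X" using mapH[OF hB0 cX] .
      ultimately show False using injH[OF hB0 \<open>h c \<in> X\<close> cX] hc by blast
    qed
    then show ?thesis using hG hY by blast
  qed
  then obtain h where hG: "h \<in> G" and hY: "\<forall>s\<in>T-{c}. h s = s" and hc: "h c \<notin> T" by blast
  have hB: "h \<in> Bij X" using hG GB by blast
  define g' where "g' = g(i := if fst l then h \<otimes>\<^bsub>BijGroup X\<^esub> g i else g i \<otimes>\<^bsub>BijGroup X\<^esub> inv\<^bsub>BijGroup X\<^esub> h)"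
  have g'G: "\<forall>j. g' j \<in> G"
    unfolding g'_def using gG hG sub subgroup.m_closed subgroup.m_inv_closed by fastforce
  have g'B: "\<forall>j. g' j \<in> Bij X" using g'G GB by blast
  have Ll: "L X g' l = h \<otimes>\<^bsub>BijGroup X\<^esub> a"
  proof (cases "fst l")
    case True then show ?thesis unfolding g'_def a_def L_def i_def by simp
  next
    case False
    have "inv\<^bsub>BijGroup X\<^esub> (g i \<otimes>\<^bsub>BijGroup X\<^esub> inv\<^bsub>BijGroup X\<^esub> h)
      = h \<otimes>\<^bsub>BijGroup X\<^esub> inv\<^bsub>BijGroup X\<^esub> (g i)"
      using inv_multH[OF gB[rule_format] invH_closed[OF hB]] 
        group.inv_inv[OF group_BijGroup] hB carrH by metis
    then show ?thesis using False unfolding g'_def a_def L_def i_def by simp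
  qed
  have Linv: "L X g' (letter_inverse l) = L X g (letter_inverse l) \<otimes>\<^bsub>BijGroup X\<^esub> inv\<^bsub>BijGroup X\<^esub> h
     \<and> L X g (letter_inverse l) = inv\<^bsub>BijGroup X\<^esub> a"
  proof (cases "fst l")
    case True
    have "inv\<^bsub>BijGroup X\<^esub> (h \<otimes>\<^bsub>BijGroup X\<^esub> g i)
      = inv\<^bsub>BijGroup X\<^esub> (g i) \<otimes>\<^bsub>BijGroup X\<^esub> inv\<^bsub>BijGroup X\<^esub> h"
      using inv_multH[OF hB gB[rule_format]] by metis
    then show ?thesis using True unfolding g'_def a_def L_def i_def letter_inverse_def by simp
  next
    case False
    have "inv\<^bsub>BijGroup X\<^esub> (inv\<^bsub>BijGroup X\<^esub> (g i)) = g i"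
      using group.inv_inv[OF group_BijGroup] gB carrH by metis
    then show ?thesis using False unfolding g'_def a_def L_def i_def letter_inverse_def by simp
  qed
  have Loth: "snd m \<noteq> i \<Longrightarrow> L X g' m = L X g m" for m
    unfolding g'_def L_def by simp
  have mcases: "snd m = i \<Longrightarrow> m = l \<or> m = letter_inverse l" for m :: "bool \<times> nat"
    unfolding i_def letter_inverse_def by (cases m; cases l) auto
  have agr: "\<forall>m w1 w2. w = w1 @ m # w2 \<longrightarrow> L X g' m (pt X g w2 x) = L X g m (pt X g w2 x)"
  proof (intro allI impI)
    fix m w1 w2 assume w: "w = w1 @ m # w2"
    define y where "y = pt X g w2 x"
    have yX: "y \<in> X" unfolding y_def using pt_X[OF gB x] .
    have sf: "y \<noteq> xj" "y \<in> T" "L X g m y \<in> T" "w1 \<noteq> [] \<longrightarrow> L X g m y \<noteq> xj"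
      using split_facts[OF d w] unfolding y_def xj_def T_def by auto
    show "L X g' m y = L X g m y"
    proof (cases "snd m = i")
      case False then show ?thesis using Loth by simp
    next
      case True
      then consider "m = l" | "m = letter_inverse l" using mcases by blast
      then show ?thesis
      proof cases
        case 1
        have "a y \<noteq> c" unfolding c_def using injH[OF aB yX xjX] sf(1) by blast
        then have "h (a y) = a y" using hY sf(3) 1 a_def by blast
        then show ?thesis using 1 Ll multH[OF hB aB yX] a_def by simp
      next
        case 2
        have "y \<noteq> c"
        proof
          assume yc: "y = c"
          have "L X g m y = xj" using 2 Linv yc c_def invH1[OF aB xjX] by simp
          then have "w1 = []" using sf(4) by blast
          then have "w = m # w2" using w by simp
          then show False using Cons.prems 2 by simp
        qed
        then have "(inv\<^bsub>BijGroup X\<^esub> h) y = y" using hY sf(2) invH_fix[OF hB yX] by blast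
        then show ?thesis using 2 Linv multH[OF invH_closed[OF aB] invH_closed[OF hB] yX] by simp
      qed
    qed
  qed
  have eq: "traj X g' w x = traj X g w x" "pt X g' w x = xj"
    using agree[OF agr] xj_def by auto
  have "pt X g' (l # w) x = h c"
    using eq Ll multH[OF hB aB xjX] c_def by simp
  then have "traj X g' (l # w) x = h c # traj X g w x" using eq by simp
  then have "distinct (traj X g' (l # w) x)" using d hc T_def by simp
  then show ?case using g'G x by blast
qed

lemma x_in_traj: "x \<in> set (traj X g w x)"
  by (induction w) auto

theorem theorem1:
  fixes X :: "'a set" and G :: "('a \<Rightarrow> 'a) set"
  assumes "X \<noteq> {}"
    and "perm_group_on X G"
    and "separates G X"
  shows "\<forall>k \<ge> 1. \<forall>w. free_group_elem k w \<and> w \<noteq> [] \<longrightarrow>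
           (\<exists>g. (\<forall>i < k. g i \<in> G) \<and>
                word_eval (BijGroup X) g w \<noteq> \<one>\<^bsub>BijGroup X\<^esub>)"
proof (intro allI impI)
  fix k :: nat and w assume "1 \<le> k" and fw: "free_group_elem k w \<and> w \<noteq> []"
  obtain x0 where x0: "x0 \<in> X" using assms(1) by blast
  have sub: "subgroup G (BijGroup X)" using assms(2) perm_group_on_def by blast
  have GB: "G \<subseteq> Bij X" using sub subgroup.subset carrH by metis
  have rw: "reduced_word w" using fw free_group_elem_def by blast
  obtain g x where gG: "\<forall>i. g i \<in> G" and x: "x \<in> X" and d: "distinct (traj X g w x)"
    using main[OF sub assms(3) x0 rw] by blast
  have gB: "\<forall>i. g i \<in> Bij X" using gG GB by blast
  obtain l w' where w: "w = l # w'" using fw by (cases w) auto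
  have "pt X g w x \<noteq> x" using d x_in_traj[of x X g w'] w by auto
  then have "word_eval (BijGroup X) g w x \<noteq> \<one>\<^bsub>BijGroup X\<^esub> x"
    using eval_pt[OF gB x] oneH[OF x] by simp
  then show "\<exists>g. (\<forall>i < k. g i \<in> G) \<and> word_eval (BijGroup X) g w \<noteq> \<one>\<^bsub>BijGroup X\<^esub>"
    using gG by metis
qed

end
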